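(* Let $t\ge 3$ and let $\mathcal{H}$ be an $n$-vertex $3$-uniform hypergraph that does not contain $K_{2,t}$ as a trace. Let $A$ be the set of edges of $\mathcal{H}$ containing at least one pair of vertices whose co-degree in $\mathcal{H}$ is $1$, and let $B=\mathcal{H}\setminus A$. For a vertex $x$, let $N_1(x)=\{z: \exists e\in B,\ \{x,z\}\subseteq e\}$. Then for any two distinct vertices $x,y\in V(\mathcal{H})$, $|N_1(x)\cap N_1(y)|\le (t-1)(6t-2)$.
   Context: A hypergraph $\mathcal{H}$ contains a graph $F$ (vertices $v_1,\dots,v_p$, edges $e_1,\dots,e_q$) as a trace if there exist distinct vertices $w_1,\dots,w_p\in V(\mathcal{H})$ and distinct edges $f_1,\dots,f_q\in E(\mathcal{H})$ such that whenever $e_i=v_\alpha v_\beta$, $f_i\cap\{w_1,\dots,w_p\}=\{w_\alpha,w_\beta\}$. The co-degree of a pair $\{x,y\}$ in $\mathcal{H}$ is the number of edges of $\mathcal{H}$ containing $\{x,y\}$. $\mathcal{H}\setminus A$ denotes the hypergraph on $V(\mathcal{H})$ with edge set $E(\mathcal{H})\setminus A$. *)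

theory Defs
  imports Main
begin

definition uniform_hypergraph :: "nat \<Rightarrow> 'a set \<Rightarrow> 'a set set \<Rightarrow> bool" where
  "uniform_hypergraph k V E \<longleftrightarrow> finite V \<and> (\<forall>e\<in>E. e \<subseteq> V \<and> card e = k)"

definition contains_trace :: "'a set \<Rightarrow> 'a set set \<Rightarrow> 'b set \<Rightarrow> 'b set set \<Rightarrow> bool" where
  "contains_trace V E VF EF \<longleftrightarrow>
     (\<exists>phi psi. inj_on phi VF \<and> phi ` VF \<subseteq> V \<and> inj_on psi EF \<and> psi ` EF \<subseteq> E \<and>
        (\<forall>e\<in>EF. psi e \<inter> phi ` VF = phi ` e))"

definition K2t_vertices :: "nat \<Rightarrow> nat set" where
  "K2t_vertices t = {0..<t+2}"

definition K2t_edges :: "nat \<Rightarrow> nat set set" where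
  "K2t_edges t = {{i, j} | i j. i \<in> {0, 1} \<and> j \<in> {2..<t+2}}"

definition codegree :: "'a set set \<Rightarrow> 'a \<Rightarrow> 'a \<Rightarrow> nat" where
  "codegree E x y = card {e \<in> E. {x, y} \<subseteq> e}"

definition edgesA :: "'a set set \<Rightarrow> 'a set set" where
  "edgesA E = {e \<in> E. \<exists>x y. x \<noteq> y \<and> {x, y} \<subseteq> e \<and> codegree E x y = 1}"

definition edgesB :: "'a set set \<Rightarrow> 'a set set" where
  "edgesB E = E - edgesA E"

definition N1 :: "'a set set \<Rightarrow> 'a \<Rightarrow> 'a set" where
  "N1 E x = {z. \<exists>e\<in>edgesB E. {x, z} \<subseteq> e}"

end

theory Submission imports Defs begin

lemma low_deg:
  fixes g :: "'a \<Rightarrow> 'a set"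
  assumes fin: "finite S" and ne: "S \<noteq> {}" and deg: "\<forall>z\<in>S. card (g z \<inter> S) \<le> 2"
  shows "\<exists>z\<in>S. card {w\<in>S. z \<in> g w} + card (g z \<inter> S) \<le> 4"
proof (rule ccontr)
  assume "\<not> ?thesis"
  hence all: "\<forall>z\<in>S. 5 \<le> card {w\<in>S. z \<in> g w} + card (g z \<inter> S)" by auto
  have c1: "\<And>z. card {w\<in>S. z \<in> g w} = (\<Sum>w\<in>S. if z \<in> g w then 1 else 0)"
    using fin by (simp add: sum.inter_filter[symmetric])
  have c2: "\<And>w. card (g w \<inter> S) = (\<Sum>z\<in>S. if z \<in> g w then 1 else 0)"
  proof -
    fix w
    have "g w \<inter> S = {z\<in>S. z \<in> g w}" by auto
    thus "card (g w \<inter> S) = (\<Sum>z\<in>S. if z \<in> g w then 1 else 0)"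
      using fin by (simp add: sum.inter_filter[symmetric])
  qed
  have sw: "(\<Sum>z\<in>S. card {w\<in>S. z \<in> g w}) = (\<Sum>w\<in>S. card (g w \<inter> S))"
    unfolding c1 c2 by (rule sum.swap)
  have "(\<Sum>w\<in>S. card (g w \<inter> S)) \<le> card S * 2"
    using sum_bounded_above[of S "\<lambda>w. card (g w \<inter> S)" 2] deg by auto
  moreover have "card S * 5 \<le> (\<Sum>z\<in>S. card {w\<in>S. z \<in> g w} + card (g z \<inter> S))"
    using sum_bounded_below[of S 5 "\<lambda>z. card {w\<in>S. z \<in> g w} + card (g z \<inter> S)"] all by auto
  moreover have "card S > 0" using fin ne by auto
  ultimately show False unfolding sum.distrib sw by linarith
qed

lemma indep_exists:
  fixes g :: "'a \<Rightarrow> 'a set"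
  assumes "finite S" "\<forall>z\<in>S. card (g z \<inter> S) \<le> 2 \<and> z \<notin> g z" "5*k \<le> card S"
  shows "\<exists>Z\<subseteq>S. card Z = k \<and> (\<forall>z\<in>Z. g z \<inter> Z = {})"
  using assms
proof (induction k arbitrary: S)
  case 0
  then show ?case by auto
next
  case (Suc k)
  hence "S \<noteq> {}" by auto
  have d: "\<forall>z\<in>S. card (g z \<inter> S) \<le> 2" using Suc.prems by auto
  obtain z where z: "z \<in> S" "card {w\<in>S. z \<in> g w} + card (g z \<inter> S) \<le> 4"
    using low_deg[OF Suc.prems(1) \<open>S \<noteq> {}\<close> d] by blast
  define N where "N = insert z ({w\<in>S. z \<in> g w} \<union> (g z \<inter> S))"
  have fN: "finite N" unfolding N_def using Suc.prems(1) by auto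
  have cN: "card N \<le> 5"
  proof -
    have "card N \<le> Suc (card ({w\<in>S. z \<in> g w} \<union> (g z \<inter> S)))" unfolding N_def
      using card_insert_le_m1 by (simp add: Suc.prems(1) card_insert_if)
    also have "\<dots> \<le> Suc (card {w\<in>S. z \<in> g w} + card (g z \<inter> S))"
      using card_Un_le by auto
    finally show ?thesis using z(2) by linarith
  qed
  have NS: "N \<subseteq> S" unfolding N_def using z by auto
  have "card (S - N) = card S - card N" using card_Diff_subset[OF fN NS] .
  hence "5 * k \<le> card (S - N)" using Suc.prems(3) cN by simp
  moreover have "\<forall>w\<in>S - N. card (g w \<inter> (S - N)) \<le> 2 \<and> w \<notin> g w"
  proof
    fix w assume w: "w \<in> S - N"
    have "card (g w \<inter> (S - N)) \<le> card (g w \<inter> S)"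
      by (rule card_mono) (use Suc.prems(1) in auto)
    thus "card (g w \<inter> (S - N)) \<le> 2 \<and> w \<notin> g w" using Suc.prems(2) w by force
  qed
  ultimately obtain Z where Z: "Z \<subseteq> S - N" "card Z = k" "\<forall>w\<in>Z. g w \<inter> Z = {}"
    using Suc.IH[of "S - N"] Suc.prems(1) by auto
  have fZ: "finite Z" using Z(1) Suc.prems(1) finite_subset by blast
  have zZ: "z \<notin> Z" using Z(1) N_def by auto
  show ?case
  proof (intro exI[of _ "insert z Z"] conjI)
    show "insert z Z \<subseteq> S" using Z(1) z(1) by auto
    show "card (insert z Z) = Suc k" using fZ zZ Z(2) by simp
    show "\<forall>w\<in>insert z Z. g w \<inter> insert z Z = {}"
    proof
      fix w assume w: "w \<in> insert z Z"
      show "g w \<inter> insert z Z = {}"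
      proof (cases "w = z")
        case True
        then show ?thesis using Z(1) N_def Suc.prems(2) z(1) by auto
      next
        case False
        hence "w \<in> Z" using w by auto
        then show ?thesis using Z N_def by auto
      qed
    qed
  qed
qed

lemma avoid:
  assumes H: "uniform_hypergraph 3 V E" and zN: "z \<in> N1 E u" and d: "z \<noteq> u" "w \<noteq> u" "w \<noteq> z"
  shows "\<exists>e\<in>E. {u, z} \<subseteq> e \<and> w \<notin> e"
proof (rule ccontr)
  assume nt: "\<not> ?thesis"
  have finV: "finite V" and Esub: "\<forall>e\<in>E. e \<subseteq> V \<and> card e = 3"
    using H unfolding uniform_hypergraph_def by auto
  have finE: "finite E"
    by (rule finite_subset[of E "Pow V"]) (use finV Esub in auto)
  obtain e where e: "e \<in> edgesB E" "{u, z} \<subseteq> e" using zN unfolding N1_def by auto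
  have eE: "e \<in> E" and eA: "e \<notin> edgesA E" using e(1) unfolding edgesB_def by auto
  have cd: "codegree E u z \<noteq> 1" using eA e(2) eE d(1) unfolding edgesA_def by auto
  define C where "C = {e \<in> E. {u, z} \<subseteq> e}"
  have finC: "finite C" unfolding C_def using finE by auto
  have "e \<in> C" unfolding C_def using eE e(2) by auto
  hence "card C \<noteq> 0" using finC by auto
  moreover have "card C \<noteq> 1" using cd unfolding codegree_def C_def .
  ultimately have "2 \<le> card C" by linarith
  have sub: "C \<subseteq> {{u, z, w}}"
  proof
    fix f assume f: "f \<in> C"
    hence fE: "f \<in> E" and fs: "{u, z} \<subseteq> f" unfolding C_def by auto
    have "w \<in> f" using nt fE fs by auto
    hence s: "{u, z, w} \<subseteq> f" using fs by auto
    have "card {u, z, w} = 3" using d by auto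
    moreover have cf: "card f = 3" using Esub fE by auto
    moreover have "finite f" using cf card_gt_0_iff by fastforce
    ultimately have "{u, z, w} = f" using card_subset_eq[OF _ s] by auto
    thus "f \<in> {{u, z, w}}" by auto
  qed
  have "card C \<le> 1" using card_mono[OF _ sub] by auto
  thus False using \<open>2 \<le> card C\<close> by linarith
qed

lemma N1_sub:
  assumes H: "uniform_hypergraph 3 V E"
  shows "N1 E u \<subseteq> V"
  using H unfolding uniform_hypergraph_def N1_def edgesB_def by auto

theorem mainTheorem5:
  fixes V :: "'a set" and E :: "'a set set" and n t :: nat
  assumes "t \<ge> 3"
    and "uniform_hypergraph 3 V E" and "card V = n"
    and "\<not> contains_trace V E (K2t_vertices t) (K2t_edges t)"
    and "x \<in> V" and "y \<in> V" and "x \<noteq> y"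
  shows "card (N1 E x \<inter> N1 E y) \<le> (t - 1) * (6 * t - 2)"
proof (rule ccontr)
  assume big: "\<not> ?thesis"
  note H = assms(2)
  have finV: "finite V" and Esub: "\<forall>e\<in>E. e \<subseteq> V \<and> card e = 3"
    using H unfolding uniform_hypergraph_def by auto
  define S where "S = N1 E x \<inter> N1 E y"
  define S' where "S' = S - {x, y}"
  have finS: "finite S" unfolding S_def using N1_sub[OF H] finV finite_subset by blast
  have finS': "finite S'" unfolding S'_def using finS by auto
  have "2 * (6 * t - 2) \<le> (t - 1) * (6 * t - 2)"
    using assms(1) by (intro mult_right_mono) auto
  hence "5 * t + 2 \<le> (t - 1) * (6 * t - 2)" using assms(1) by linarith
  hence c1: "5 * t + 2 < card S" using big unfolding S_def by linarith
  have "card S - card {x, y} \<le> card S'" unfolding S'_def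
    by (rule diff_card_le_card_Diff) auto
  moreover have "card {x, y} \<le> 2" by (simp add: card_insert_if)
  ultimately have cS': "5 * t \<le> card S'" using c1 by linarith
  have exX: "\<forall>z\<in>S'. \<exists>e\<in>E. {x, z} \<subseteq> e \<and> y \<notin> e"
  proof
    fix z assume "z \<in> S'"
    hence "z \<in> N1 E x" "z \<noteq> x" "z \<noteq> y" unfolding S'_def S_def by auto
    thus "\<exists>e\<in>E. {x, z} \<subseteq> e \<and> y \<notin> e" using avoid[OF H, of z x y] assms(7) by auto
  qed
  have exY: "\<forall>z\<in>S'. \<exists>e\<in>E. {y, z} \<subseteq> e \<and> x \<notin> e"
  proof
    fix z assume "z \<in> S'"
    hence "z \<in> N1 E y" "z \<noteq> x" "z \<noteq> y" unfolding S'_def S_def by auto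
    thus "\<exists>e\<in>E. {y, z} \<subseteq> e \<and> x \<notin> e" using avoid[OF H, of z y x] assms(7) by auto
  qed
  define EdX where "EdX z = (SOME e. e \<in> E \<and> {x, z} \<subseteq> e \<and> y \<notin> e)" for z
  define EdY where "EdY z = (SOME e. e \<in> E \<and> {y, z} \<subseteq> e \<and> x \<notin> e)" for z
  have EdXp: "EdX z \<in> E \<and> {x, z} \<subseteq> EdX z \<and> y \<notin> EdX z" if "z \<in> S'" for z
    unfolding EdX_def by (rule someI_ex) (use exX that in blast)
  have EdYp: "EdY z \<in> E \<and> {y, z} \<subseteq> EdY z \<and> x \<notin> EdY z" if "z \<in> S'" for z
    unfolding EdY_def by (rule someI_ex) (use exY that in blast)
  define g where "g z = (EdX z \<union> EdY z) - {x, y, z}" for z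
  have gdeg: "\<forall>z\<in>S'. card (g z \<inter> S') \<le> 2 \<and> z \<notin> g z"
  proof
    fix z assume z: "z \<in> S'"
    have zxy: "z \<noteq> x" "z \<noteq> y" using z unfolding S'_def by auto
    have c2: "card {x, z} = 2" "card {y, z} = 2" using zxy by auto
    have fX: "finite (EdX z)" "card (EdX z) = 3" using EdXp[OF z] Esub finV finite_subset by meson+
    have fY: "finite (EdY z)" "card (EdY z) = 3" using EdYp[OF z] Esub finV finite_subset by meson+
    have a: "card (EdX z - {x, z}) = 1"
      using card_Diff_subset[of "{x, z}" "EdX z"] EdXp[OF z] fX c2 by auto
    have b: "card (EdY z - {y, z}) = 1"
      using card_Diff_subset[of "{y, z}" "EdY z"] EdYp[OF z] fY c2 by auto
    have "g z \<inter> S' \<subseteq> (EdX z - {x, z}) \<union> (EdY z - {y, z})" unfolding g_def by auto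
    hence "card (g z \<inter> S') \<le> card ((EdX z - {x, z}) \<union> (EdY z - {y, z}))"
      using fX fY by (intro card_mono) auto
    also have "\<dots> \<le> 2" using card_Un_le[of "EdX z - {x, z}" "EdY z - {y, z}"] a b by linarith
    finally show "card (g z \<inter> S') \<le> 2 \<and> z \<notin> g z" unfolding g_def by auto
  qed
  obtain Z where Z: "Z \<subseteq> S'" "card Z = t" "\<forall>z\<in>Z. g z \<inter> Z = {}"
    using indep_exists[OF finS' gdeg cS'] by blast
  have finZ: "finite Z" using Z(1) finS' finite_subset by blast
  obtain h where h: "bij_betw h {0..<t} Z" using ex_bij_betw_nat_finite[OF finZ] Z(2) by auto
  have xyZ: "x \<notin> Z" "y \<notin> Z" using Z(1) unfolding S'_def by auto
  define phi where "phi j = (if j = 0 then x else if j = 1 then y else h (j - 2))" for j :: nat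
  define psi where "psi e = (if (0::nat) \<in> e then EdX (phi (Max e)) else EdY (phi (Max e)))" for e
  have phiZ: "phi j \<in> Z" if "j \<in> {2..<t+2}" for j
    using that h unfolding phi_def bij_betw_def by auto
  have img: "phi ` K2t_vertices t = insert x (insert y Z)"
  proof
    show "phi ` K2t_vertices t \<subseteq> insert x (insert y Z)"
    proof
      fix v assume "v \<in> phi ` K2t_vertices t"
      then obtain j where j: "j < t + 2" "v = phi j" unfolding K2t_vertices_def by auto
      show "v \<in> insert x (insert y Z)"
        using phiZ[of j] j unfolding phi_def by (cases "j = 0"; cases "j = 1") auto
    qed
    show "insert x (insert y Z) \<subseteq> phi ` K2t_vertices t"
    proof
      fix v assume v: "v \<in> insert x (insert y Z)"
      show "v \<in> phi ` K2t_vertices t"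
      proof (cases "v \<in> Z")
        case True
        then obtain i where i: "i < t" "v = h i" using h unfolding bij_betw_def by auto
        have "phi (i + 2) = v" unfolding phi_def using i by auto
        thus ?thesis unfolding K2t_vertices_def using i by force
      next
        case False
        hence "v = x \<or> v = y" using v by auto
        moreover have "phi 0 = x" "phi 1 = y" unfolding phi_def by auto
        moreover have "0 \<in> K2t_vertices t" "1 \<in> K2t_vertices t" unfolding K2t_vertices_def by auto
        ultimately show ?thesis by blast
      qed
    qed
  qed
  have injphi: "inj_on phi (K2t_vertices t)"
  proof (rule inj_onI)
    fix i j assume i: "i \<in> K2t_vertices t" and j: "j \<in> K2t_vertices t" and eq: "phi i = phi j"
    have hi: "inj_on h {0..<t}" using h unfolding bij_betw_def by auto
    show "i = j"
    proof (cases "i \<le> 1 \<or> j \<le> 1")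
      case True
      then show ?thesis using eq phiZ[of i] phiZ[of j] i j xyZ assms(7)
        unfolding K2t_vertices_def phi_def by (auto split: if_splits)
    next
      case False
      hence "h (i - 2) = h (j - 2)" using eq unfolding phi_def by auto
      hence "i - 2 = j - 2" using hi i j False unfolding K2t_vertices_def inj_on_def by auto
      thus ?thesis using False by auto
    qed
  qed
  have trace: "\<forall>e\<in>K2t_edges t. psi e \<inter> phi ` K2t_vertices t = phi ` e"
  proof
    fix e assume "e \<in> K2t_edges t"
    then obtain i j where ij: "e = {i, j}" "i \<in> {0, 1}" "j \<in> {2..<t+2}" unfolding K2t_edges_def by auto
    have M: "Max e = j" using ij by auto
    define z where "z = phi j"
    have zZ: "z \<in> Z" using phiZ ij(3) z_def by auto
    hence zS: "z \<in> S'" using Z(1) by auto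
    have gz: "g z \<inter> Z = {}" using Z(3) zZ by auto
    show "psi e \<inter> phi ` K2t_vertices t = phi ` e"
    proof (cases "i = 0")
      case True
      have ps: "psi e = EdX z" unfolding psi_def M z_def using True ij by auto
      have pe: "phi ` e = {x, z}" using True ij unfolding z_def phi_def by auto
      have "EdX z \<inter> insert x (insert y Z) = {x, z}"
      proof
        show "{x, z} \<subseteq> EdX z \<inter> insert x (insert y Z)" using EdXp[OF zS] zZ by auto
        show "EdX z \<inter> insert x (insert y Z) \<subseteq> {x, z}"
        proof
          fix v assume v: "v \<in> EdX z \<inter> insert x (insert y Z)"
          show "v \<in> {x, z}"
          proof (rule ccontr)
            assume nv: "v \<notin> {x, z}"
            have "v \<noteq> y" using v EdXp[OF zS] by auto
            hence "v \<in> g z" "v \<in> Z" using v nv unfolding g_def by auto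
            thus False using gz by auto
          qed
        qed
      qed
      thus ?thesis using ps pe img by simp
    next
      case False
      hence i1: "i = 1" using ij by auto
      have ps: "psi e = EdY z" unfolding psi_def M z_def using i1 ij by auto
      have pe: "phi ` e = {y, z}" using i1 ij unfolding z_def phi_def by auto
      have "EdY z \<inter> insert x (insert y Z) = {y, z}"
      proof
        show "{y, z} \<subseteq> EdY z \<inter> insert x (insert y Z)" using EdYp[OF zS] zZ by auto
        show "EdY z \<inter> insert x (insert y Z) \<subseteq> {y, z}"
        proof
          fix v assume v: "v \<in> EdY z \<inter> insert x (insert y Z)"
          show "v \<in> {y, z}"
          proof (rule ccontr)
            assume nv: "v \<notin> {y, z}"
            have "v \<noteq> x" using v EdYp[OF zS] by auto
            hence "v \<in> g z" "v \<in> Z" using v nv unfolding g_def by auto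
            thus False using gz by auto
          qed
        qed
      qed
      thus ?thesis using ps pe img by simp
    qed
  qed
  have EFsub: "\<forall>e\<in>K2t_edges t. e \<subseteq> K2t_vertices t"
    unfolding K2t_edges_def K2t_vertices_def by auto
  have injpsi: "inj_on psi (K2t_edges t)"
  proof (rule inj_onI)
    fix e1 e2 assume e1: "e1 \<in> K2t_edges t" and e2: "e2 \<in> K2t_edges t" and eq: "psi e1 = psi e2"
    have "phi ` e1 = phi ` e2" using trace e1 e2 eq by metis
    thus "e1 = e2" using inj_on_image_eq_iff[OF injphi] EFsub e1 e2 by blast
  qed
  have psiE: "psi ` K2t_edges t \<subseteq> E"
  proof
    fix f assume "f \<in> psi ` K2t_edges t"
    then obtain e where e: "e \<in> K2t_edges t" "f = psi e" by auto
    then obtain i j where ij: "e = {i, j}" "i \<in> {0, 1}" "j \<in> {2..<t+2}" unfolding K2t_edges_def by auto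
    have M: "Max e = j" using ij by auto
    have "phi j \<in> S'" using phiZ ij(3) Z(1) by auto
    thus "f \<in> E" using EdXp EdYp e(2) unfolding psi_def M by auto
  qed
  have phiV: "phi ` K2t_vertices t \<subseteq> V"
    using img assms(5,6) Z(1) N1_sub[OF H] unfolding S'_def S_def by auto
  have "contains_trace V E (K2t_vertices t) (K2t_edges t)"
    unfolding contains_trace_def using injphi phiV injpsi psiE trace by blast
  thus False using assms(4) by blast
qed

end
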